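(* Let $\mathcal{A}$ be a finite set of players and $\mathcal{R}$ a finite set of resources; each player $i$ has a finite strategy set $\Gamma_i$, each $\gamma_i\in\Gamma_i$ determining a set $\gamma_i^{\mathrm{cg}}\subseteq\mathcal{R}$. For $\gamma\in\Gamma=\prod_i\Gamma_i$ let $l_r(\gamma)=\sum_i\mathbf{1}[r\in\gamma_i^{\mathrm{cg}}]$, and let each $J_r$ be a polynomial with non-negative coefficients of degree at most $d$. Player costs are $J_i(\gamma)=\sum_{r\in\gamma_i^{\mathrm{cg}}}J_r(l_r(\gamma))+J_i^{\mathrm{per}}(\gamma_i)$ with $J_i^{\mathrm{per}}\ge0$ depending only on $\gamma_i$. Let $C=\sum_iJ_i$, $\Gamma_{\mathrm{NE}}$ the set of pure Nash equilibria, $\Gamma^\star=\arg\min_\Gamma C$, $\mathrm{PoA}=\max_{\Gamma_{\mathrm{NE}}}C/\min_\Gamma C$, and $\alpha^\star\ge0$ the largest constant with $J_i^{\mathrm{per}}(\gamma_i)\ge\alpha^\star\sum_{r\in\gamma_i^{\mathrm{cg}}}J_r(l_r(\gamma))$ for all $i$ and all $\gamma\in\Gamma_{\mathrm{NE}}\cup\Gamma^\star$. Let $\mathcal{P}_d$ denote the set of polynomials of degree at most $d$ with non-negative coefficients. Then $\mathrm{PoA}$ is at most $$\min_{\tilde\lambda\in\mathbb{R},\ \tilde\mu\in(0,1+\alpha^\star)}\ \frac{\tilde\lambda+\alpha^\star}{1-\tilde\mu+\alpha^\star}\quad\text{s.t.}\quad y\,J(x+1)\le\tilde\lambda\,y\,J(y)+\tilde\mu\,x\,J(x)\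 \ \forall x,y\in\mathbb{N}_0,\ J\in\mathcal{P}_d.$$
   Context: This is the congestion-game model of urban driving games (resources are space-time-proximity grid cells). A pure Nash equilibrium is a $\gamma$ with $J_i(\gamma)\le J_i(\gamma_i',\gamma_{-i})$ for all $i$ and $\gamma_i'\in\Gamma_i$. *)

theory Defs
  imports "HOL-Computational_Algebra.Polynomial" "HOL-Library.FuncSet"
begin

definition profiles :: "'p set \<Rightarrow> ('p \<Rightarrow> 's set) \<Rightarrow> ('p \<Rightarrow> 's) set" where
  "profiles A Gam = PiE A Gam"

definition load :: "'p set \<Rightarrow> ('p \<Rightarrow> 's \<Rightarrow> 'r set) \<Rightarrow> ('p \<Rightarrow> 's) \<Rightarrow> 'r \<Rightarrow> nat" where
  "load A cg g r = (\<Sum>i\<in>A. if r \<in> cg i (g i) then 1 else 0)"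

definition cong_cost :: "'p set \<Rightarrow> ('p \<Rightarrow> 's \<Rightarrow> 'r set) \<Rightarrow> ('r \<Rightarrow> real poly)
    \<Rightarrow> ('p \<Rightarrow> 's) \<Rightarrow> 'p \<Rightarrow> real" where
  "cong_cost A cg Jr g i = (\<Sum>r\<in>cg i (g i). poly (Jr r) (real (load A cg g r)))"

definition player_cost :: "'p set \<Rightarrow> ('p \<Rightarrow> 's \<Rightarrow> 'r set) \<Rightarrow> ('r \<Rightarrow> real poly)
    \<Rightarrow> ('p \<Rightarrow> 's \<Rightarrow> real) \<Rightarrow> ('p \<Rightarrow> 's) \<Rightarrow> 'p \<Rightarrow> real" where
  "player_cost A cg Jr Jper g i = cong_cost A cg Jr g i + Jper i (g i)"

definition social_cost :: "'p set \<Rightarrow> ('p \<Rightarrow> 's \<Rightarrow> 'r set) \<Rightarrow> ('r \<Rightarrow> real poly)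
    \<Rightarrow> ('p \<Rightarrow> 's \<Rightarrow> real) \<Rightarrow> ('p \<Rightarrow> 's) \<Rightarrow> real" where
  "social_cost A cg Jr Jper g = (\<Sum>i\<in>A. player_cost A cg Jr Jper g i)"

definition is_NE :: "'p set \<Rightarrow> ('p \<Rightarrow> 's set) \<Rightarrow> ('p \<Rightarrow> 's \<Rightarrow> 'r set) \<Rightarrow> ('r \<Rightarrow> real poly)
    \<Rightarrow> ('p \<Rightarrow> 's \<Rightarrow> real) \<Rightarrow> ('p \<Rightarrow> 's) \<Rightarrow> bool" where
  "is_NE A Gam cg Jr Jper g \<longleftrightarrow> g \<in> profiles A Gam \<and>
     (\<forall>i\<in>A. \<forall>s\<in>Gam i. player_cost A cg Jr Jper g i \<le> player_cost A cg Jr Jper (g(i := s)) i)"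

definition NE_set :: "'p set \<Rightarrow> ('p \<Rightarrow> 's set) \<Rightarrow> ('p \<Rightarrow> 's \<Rightarrow> 'r set) \<Rightarrow> ('r \<Rightarrow> real poly)
    \<Rightarrow> ('p \<Rightarrow> 's \<Rightarrow> real) \<Rightarrow> ('p \<Rightarrow> 's) set" where
  "NE_set A Gam cg Jr Jper = {g. is_NE A Gam cg Jr Jper g}"

definition opt_set :: "'p set \<Rightarrow> ('p \<Rightarrow> 's set) \<Rightarrow> ('p \<Rightarrow> 's \<Rightarrow> 'r set) \<Rightarrow> ('r \<Rightarrow> real poly)
    \<Rightarrow> ('p \<Rightarrow> 's \<Rightarrow> real) \<Rightarrow> ('p \<Rightarrow> 's) set" where
  "opt_set A Gam cg Jr Jper = {g \<in> profiles A Gam.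
     \<forall>h\<in>profiles A Gam. social_cost A cg Jr Jper g \<le> social_cost A cg Jr Jper h}"

definition PoA :: "'p set \<Rightarrow> ('p \<Rightarrow> 's set) \<Rightarrow> ('p \<Rightarrow> 's \<Rightarrow> 'r set) \<Rightarrow> ('r \<Rightarrow> real poly)
    \<Rightarrow> ('p \<Rightarrow> 's \<Rightarrow> real) \<Rightarrow> real" where
  "PoA A Gam cg Jr Jper =
     Max (social_cost A cg Jr Jper ` NE_set A Gam cg Jr Jper) /
     Min (social_cost A cg Jr Jper ` profiles A Gam)"

definition Pd :: "nat \<Rightarrow> real poly set" where
  "Pd d = {J. degree J \<le> d \<and> (\<forall>k. 0 \<le> coeff J k)}"

definition alpha_ok :: "'p set \<Rightarrow> ('p \<Rightarrow> 's set) \<Rightarrow> ('p \<Rightarrow> 's \<Rightarrow> 'r set) \<Rightarrow> ('r \<Rightarrow> real poly)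
    \<Rightarrow> ('p \<Rightarrow> 's \<Rightarrow> real) \<Rightarrow> real \<Rightarrow> bool" where
  "alpha_ok A Gam cg Jr Jper a \<longleftrightarrow> 0 \<le> a \<and>
     (\<forall>g \<in> NE_set A Gam cg Jr Jper \<union> opt_set A Gam cg Jr Jper. \<forall>i\<in>A.
        Jper i (g i) \<ge> a * cong_cost A cg Jr g i)"

end

theory Submission imports Defs begin

lemma upd_prof: "g \<in> profiles A Gam \<Longrightarrow> i \<in> A \<Longrightarrow> s \<in> Gam i \<Longrightarrow> g(i := s) \<in> profiles A Gam"
  unfolding profiles_def using PiE_fun_upd[of s Gam i g A] by (simp add: insert_absorb)

lemma load_split: "finite A \<Longrightarrow> i \<in> A \<Longrightarrow>
  load A cg g r = load (A - {i}) cg g r + (if r \<in> cg i (g i) then 1 else 0)"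
  unfolding load_def by (simp add: sum.remove add.commute)

lemma load_upd: "i \<notin> B \<Longrightarrow> load B cg (g(i := s)) r = load B cg g r"
  unfolding load_def by (rule sum.cong) auto

lemma poly_nonneg_Pd: "J \<in> Pd d \<Longrightarrow> 0 \<le> x \<Longrightarrow> 0 \<le> poly J (x::real)"
  unfolding Pd_def poly_altdef by (auto intro!: sum_nonneg)

lemma poly_mono_Pd: "J \<in> Pd d \<Longrightarrow> 0 \<le> x \<Longrightarrow> x \<le> y \<Longrightarrow> poly J (x::real) \<le> poly J y"
  unfolding Pd_def poly_altdef
  by (auto intro!: sum_mono mult_left_mono power_mono)

lemma sum_swap_load:
  assumes "finite A" "finite R" "\<And>i. i \<in> A \<Longrightarrow> cg i (h i) \<subseteq> R"
  shows "(\<Sum>i\<in>A. \<Sum>r\<in>cg i (h i). f r) = (\<Sum>r\<in>R. real (load A cg h r) * (f r :: real))"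
proof -
  have "(\<Sum>i\<in>A. \<Sum>r\<in>cg i (h i). f r) = (\<Sum>i\<in>A. \<Sum>r\<in>R. if r \<in> cg i (h i) then f r else 0)"
  proof (rule sum.cong[OF refl])
    fix i assume "i \<in> A"
    then have "cg i (h i) \<subseteq> R" using assms(3) by auto
    then show "(\<Sum>r\<in>cg i (h i). f r) = (\<Sum>r\<in>R. if r \<in> cg i (h i) then f r else 0)"
      using assms(2) by (simp add: sum.inter_restrict[symmetric] Int_absorb1 inf.absorb_iff2)
  qed
  also have "\<dots> = (\<Sum>r\<in>R. \<Sum>i\<in>A. if r \<in> cg i (h i) then f r else 0)" by (rule sum.swap)
  also have "\<dots> = (\<Sum>r\<in>R. real (load A cg h r) * f r)"
    unfolding load_def by (auto simp: sum_distrib_right intro!: sum.cong)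
  finally show ?thesis .
qed

definition pot :: "'p set \<Rightarrow> 'r set \<Rightarrow> ('p \<Rightarrow> 's \<Rightarrow> 'r set) \<Rightarrow> ('r \<Rightarrow> real poly)
    \<Rightarrow> ('p \<Rightarrow> 's \<Rightarrow> real) \<Rightarrow> ('p \<Rightarrow> 's) \<Rightarrow> real" where
  "pot A R cg Jr Jper g = (\<Sum>r\<in>R. \<Sum>k<load A cg g r. poly (Jr r) (real k + 1)) + (\<Sum>j\<in>A. Jper j (g j))"

lemma pot_split:
  assumes "finite A" "finite R" "i \<in> A" "cg i (g i) \<subseteq> R"
  shows "pot A R cg Jr Jper g =
    (\<Sum>r\<in>R. \<Sum>k<load (A - {i}) cg g r. poly (Jr r) (real k + 1)) + (\<Sum>j\<in>A - {i}. Jper j (g j))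
    + player_cost A cg Jr Jper g i"
proof -
  let ?m = "\<lambda>r. load (A - {i}) cg g r"
  have 1: "(\<Sum>k<load A cg g r. poly (Jr r) (real k + 1)) =
     (\<Sum>k<?m r. poly (Jr r) (real k + 1)) + (if r \<in> cg i (g i) then poly (Jr r) (real (load A cg g r)) else 0)" for r
    using load_split[OF assms(1,3), of cg g r] by (auto simp: add.commute)
  have 2: "(\<Sum>r\<in>R. if r \<in> cg i (g i) then poly (Jr r) (real (load A cg g r)) else 0) = cong_cost A cg Jr g i"
    unfolding cong_cost_def using assms(2,4)
    by (simp add: sum.inter_restrict[symmetric] Int_absorb1 inf.absorb_iff2)
  have 3: "(\<Sum>j\<in>A. Jper j (g j)) = Jper i (g i) + (\<Sum>j\<in>A - {i}. Jper j (g j))"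
    using assms(1,3) by (simp add: sum.remove)
  show ?thesis unfolding pot_def player_cost_def 3
    by (simp add: 1 sum.distrib 2)
qed

lemma NE_exists:
  assumes "finite A" "finite R"
    and "\<And>i. i \<in> A \<Longrightarrow> finite (Gam i) \<and> Gam i \<noteq> {}"
    and "\<And>i s. i \<in> A \<Longrightarrow> s \<in> Gam i \<Longrightarrow> cg i s \<subseteq> R"
  shows "\<exists>g. is_NE A Gam cg Jr Jper g"
proof -
  let ?P = "profiles A Gam"
  let ?f = "pot A R cg Jr Jper"
  have fin: "finite ?P" unfolding profiles_def using assms(1,3) by (simp add: finite_PiE)
  have ne: "?P \<noteq> {}" unfolding profiles_def using assms(3) by (simp add: PiE_eq_empty_iff)
  have "Min (?f ` ?P) \<in> ?f ` ?P" using fin ne by (intro Min_in) auto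
  then obtain g where g: "g \<in> ?P" "?f g = Min (?f ` ?P)" by auto
  have gmin: "?f g \<le> ?f h" if "h \<in> ?P" for h using g fin that by simp
  have gi: "g i \<in> Gam i" if "i \<in> A" for i using g(1) that unfolding profiles_def by auto
  have "is_NE A Gam cg Jr Jper g"
    unfolding is_NE_def
  proof (intro conjI ballI)
    show "g \<in> ?P" by fact
    fix i s assume i: "i \<in> A" and s: "s \<in> Gam i"
    have h: "g(i := s) \<in> ?P" using upd_prof[OF g(1) i s] .
    have e1: "(\<Sum>r\<in>R. \<Sum>k<load (A - {i}) cg (g(i:=s)) r. poly (Jr r) (real k + 1))
        = (\<Sum>r\<in>R. \<Sum>k<load (A - {i}) cg g r. poly (Jr r) (real k + 1))"
      by (simp add: load_upd)
    have e2: "(\<Sum>j\<in>A - {i}. Jper j ((g(i:=s)) j)) = (\<Sum>j\<in>A - {i}. Jper j (g j))"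
      by (rule sum.cong) auto
    have "?f g \<le> ?f (g(i:=s))" using gmin[OF h] .
    then show "player_cost A cg Jr Jper g i \<le> player_cost A cg Jr Jper (g(i := s)) i"
      using pot_split[OF assms(1,2) i, of cg g Jr Jper] assms(4)[OF i gi[OF i]]
        pot_split[OF assms(1,2) i, of cg "g(i:=s)" Jr Jper] assms(4)[OF i s] e1 e2
      by simp
  qed
  then show ?thesis by blast
qed

lemma final_alg:
  fixes lam mu alpha Cg Pg Ch Ph :: real
  assumes "Cg + Pg \<le> lam * Ch + mu * Cg + Ph" "Pg \<ge> alpha * Cg" "Ph \<ge> alpha * Ch"
    "0 \<le> mu" "1 \<le> lam" "0 \<le> 1 + alpha"
  shows "(1 - mu + alpha) * (Cg + Pg) \<le> (lam + alpha) * (Ch + Ph)"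
proof -
  have a: "0 \<le> (1 + alpha) * (lam * Ch + mu * Cg + Ph - Cg - Pg)" using assms by simp
  have b: "0 \<le> mu * (Pg - alpha * Cg)" using assms by simp
  have c: "0 \<le> (lam - 1) * (Ph - alpha * Ch)" using assms by simp
  have "(lam + alpha) * (Ch + Ph) - (1 - mu + alpha) * (Cg + Pg) =
     (1 + alpha) * (lam * Ch + mu * Cg + Ph - Cg - Pg) + mu * (Pg - alpha * Cg) + (lam - 1) * (Ph - alpha * Ch)"
    by (simp add: algebra_simps)
  then show ?thesis using a b c by linarith
qed

theorem lemma1:
  fixes A :: "'p set" and R :: "'r set" and Gam :: "'p \<Rightarrow> 's set"
    and cg :: "'p \<Rightarrow> 's \<Rightarrow> 'r set" and Jr :: "'r \<Rightarrow> real poly"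
    and Jper :: "'p \<Rightarrow> 's \<Rightarrow> real" and d :: nat and alpha :: real
  assumes "finite A" and "finite R"
    and "\<And>i. i \<in> A \<Longrightarrow> finite (Gam i) \<and> Gam i \<noteq> {}"
    and "\<And>i s. i \<in> A \<Longrightarrow> s \<in> Gam i \<Longrightarrow> cg i s \<subseteq> R"
    and "\<And>r. r \<in> R \<Longrightarrow> Jr r \<in> Pd d"
    and "\<And>i s. i \<in> A \<Longrightarrow> s \<in> Gam i \<Longrightarrow> 0 \<le> Jper i s"
    and "alpha_ok A Gam cg Jr Jper alpha"
    and "\<And>a. alpha_ok A Gam cg Jr Jper a \<Longrightarrow> a \<le> alpha"
  shows "\<forall>lam mu. 0 < mu \<and> mu < 1 + alpha \<and>
           (\<forall>x y :: nat. \<forall>J \<in> Pd d.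
              real y * poly J (real x + 1) \<le> lam * real y * poly J (real y) + mu * real x * poly J (real x))
         \<longrightarrow> PoA A Gam cg Jr Jper \<le> (lam + alpha) / (1 - mu + alpha)"
proof (intro allI impI)
  fix lam mu
  assume H: "0 < mu \<and> mu < 1 + alpha \<and>
           (\<forall>x y :: nat. \<forall>J \<in> Pd d.
              real y * poly J (real x + 1) \<le> lam * real y * poly J (real y) + mu * real x * poly J (real x))"
  then have mu0: "0 < mu" and mu1: "mu < 1 + alpha" and
    sm: "\<And>x y J. J \<in> Pd d \<Longrightarrow> real y * poly J (real x + 1) \<le> lam * real y * poly J (real y) + mu * real x * poly J (real x)"
    by auto
  have "[:1:] \<in> Pd d" unfolding Pd_def by (simp add: coeff_pCons split: nat.splits)
  from sm[OF this, where x=0 and y=1] have lam1: "1 \<le> lam" by simp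
  have al: "0 \<le> alpha" using assms(7) unfolding alpha_ok_def by simp
  let ?P = "profiles A Gam"
  let ?C = "social_cost A cg Jr Jper"
  let ?K = "(lam + alpha) / (1 - mu + alpha)"
  have fin: "finite ?P" unfolding profiles_def using assms(1,3) by (simp add: finite_PiE)
  have ne: "?P \<noteq> {}" unfolding profiles_def using assms(3) by (simp add: PiE_eq_empty_iff)
  have prof_in: "g i \<in> Gam i" if "g \<in> ?P" "i \<in> A" for g i using that unfolding profiles_def by auto
  have cgR: "cg i (g i) \<subseteq> R" if "g \<in> ?P" "i \<in> A" for g i using assms(4) prof_in[OF that] that(2) by blast
  have NEsub: "NE_set A Gam cg Jr Jper \<subseteq> ?P" unfolding NE_set_def is_NE_def by auto
  have NEne: "NE_set A Gam cg Jr Jper \<noteq> {}" using NE_exists[OF assms(1-4), where Jr=Jr and Jper=Jper]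
    unfolding NE_set_def by auto
  have "Max (?C ` NE_set A Gam cg Jr Jper) \<in> ?C ` NE_set A Gam cg Jr Jper"
    using NEsub fin NEne by (intro Max_in) (auto intro: finite_subset)
  then obtain g where gNE: "g \<in> NE_set A Gam cg Jr Jper" and gmax: "?C g = Max (?C ` NE_set A Gam cg Jr Jper)" by auto
  have "Min (?C ` ?P) \<in> ?C ` ?P" using fin ne by (intro Min_in) auto
  then obtain h where hP: "h \<in> ?P" and hmin: "?C h = Min (?C ` ?P)" by auto
  have hopt: "h \<in> opt_set A Gam cg Jr Jper" unfolding opt_set_def using hP hmin fin by auto
  have gP: "g \<in> ?P" using gNE NEsub by auto
  have gne: "is_NE A Gam cg Jr Jper g" using gNE unfolding NE_set_def by simp
  have JrPd: "Jr r \<in> Pd d" if "r \<in> cg i (k i)" "k \<in> ?P" "i \<in> A" for r i k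
    using assms(5) cgR[OF that(2,3)] that(1) by blast
  define Cg where "Cg = (\<Sum>i\<in>A. cong_cost A cg Jr g i)"
  define Pg where "Pg = (\<Sum>i\<in>A. Jper i (g i))"
  define Ch where "Ch = (\<Sum>i\<in>A. cong_cost A cg Jr h i)"
  define Ph where "Ph = (\<Sum>i\<in>A. Jper i (h i))"
  have Cgdef: "?C g = Cg + Pg" unfolding social_cost_def player_cost_def Cg_def Pg_def by (simp add: sum.distrib)
  have Chdef: "?C h = Ch + Ph" unfolding social_cost_def player_cost_def Ch_def Ph_def by (simp add: sum.distrib)
  have Cg2: "Cg = (\<Sum>r\<in>R. real (load A cg g r) * poly (Jr r) (real (load A cg g r)))"
    unfolding Cg_def cong_cost_def using sum_swap_load[where cg=cg and h=g, OF assms(1,2) cgR[OF gP]] by simp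
  have Ch2: "Ch = (\<Sum>r\<in>R. real (load A cg h r) * poly (Jr r) (real (load A cg h r)))"
    unfolding Ch_def cong_cost_def using sum_swap_load[where cg=cg and h=h, OF assms(1,2) cgR[OF hP]] by simp
  have dev: "cong_cost A cg Jr (g(i := h i)) i \<le> (\<Sum>r\<in>cg i (h i). poly (Jr r) (real (load A cg g r) + 1))"
    if i: "i \<in> A" for i
    unfolding cong_cost_def fun_upd_same
  proof (rule sum_mono)
    fix r assume r: "r \<in> cg i (h i)"
    have "load A cg (g(i := h i)) r = load (A - {i}) cg g r + (if r \<in> cg i (h i) then 1 else 0)"
      using load_split[OF assms(1) i, of cg "g(i := h i)" r] load_upd[of i "A - {i}" cg g "h i" r] by simp
    also have "\<dots> \<le> load A cg g r + 1" using load_split[OF assms(1) i, of cg g r] by simp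
    finally have "real (load A cg (g(i := h i)) r) \<le> real (load A cg g r) + 1" by linarith
    then show "poly (Jr r) (real (load A cg (g(i := h i)) r)) \<le> poly (Jr r) (real (load A cg g r) + 1)"
      using poly_mono_Pd[OF JrPd[OF r hP i]] by simp
  qed
  have "Cg + Pg \<le> (\<Sum>i\<in>A. player_cost A cg Jr Jper (g(i := h i)) i)"
    unfolding Cgdef[symmetric] social_cost_def
    using gne prof_in[OF hP] unfolding is_NE_def by (intro sum_mono) auto
  also have "\<dots> \<le> (\<Sum>i\<in>A. (\<Sum>r\<in>cg i (h i). poly (Jr r) (real (load A cg g r) + 1)) + Jper i (h i))"
    unfolding player_cost_def using dev by (intro sum_mono) auto
  also have "\<dots> = (\<Sum>r\<in>R. real (load A cg h r) * poly (Jr r) (real (load A cg g r) + 1)) + Ph"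
    unfolding Ph_def sum.distrib using sum_swap_load[where cg=cg and h=h, OF assms(1,2) cgR[OF hP]] by simp
  also have "\<dots> \<le> (\<Sum>r\<in>R. lam * real (load A cg h r) * poly (Jr r) (real (load A cg h r))
      + mu * real (load A cg g r) * poly (Jr r) (real (load A cg g r))) + Ph"
    using sm assms(5) by (intro add_right_mono sum_mono) auto
  also have "\<dots> = lam * Ch + mu * Cg + Ph"
    unfolding Cg2 Ch2 by (simp add: sum.distrib sum_distrib_left mult.assoc)
  finally have key: "Cg + Pg \<le> lam * Ch + mu * Cg + Ph" .
  have aPg: "Pg \<ge> alpha * Cg" using assms(7) gNE unfolding alpha_ok_def Pg_def Cg_def
    by (auto simp: sum_distrib_left intro!: sum_mono)
  have aPh: "Ph \<ge> alpha * Ch" using assms(7) hopt unfolding alpha_ok_def Ph_def Ch_def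
    by (auto simp: sum_distrib_left intro!: sum_mono)
  have fa: "(1 - mu + alpha) * (Cg + Pg) \<le> (lam + alpha) * (Ch + Ph)"
    using final_alg[OF key aPg aPh] mu0 lam1 al by simp
  have den: "0 < 1 - mu + alpha" using mu1 by simp
  have Kpos: "0 < ?K" using den lam1 al by simp
  have Cg_le: "?C g \<le> ?K * ?C h"
    using fa den unfolding Cgdef Chdef by (simp add: field_simps)
  have Ch_nn: "0 \<le> ?C h"
  proof -
    have "0 \<le> Ch" unfolding Ch2 using assms(5)
      by (auto intro!: sum_nonneg mult_nonneg_nonneg poly_nonneg_Pd[OF assms(5)])
    moreover have "0 \<le> Ph" unfolding Ph_def using assms(6) prof_in[OF hP] by (auto intro!: sum_nonneg)
    ultimately show ?thesis unfolding Chdef by simp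
  qed
  show "PoA A Gam cg Jr Jper \<le> ?K"
    unfolding PoA_def gmax[symmetric] hmin[symmetric]
  proof (cases "?C h = 0")
    case True then show "?C g / ?C h \<le> ?K" using Kpos by simp
  next
    case False then have "0 < ?C h" using Ch_nn by simp
    then show "?C g / ?C h \<le> ?K" using Cg_le by (simp add: divide_le_eq mult.commute)
  qed
qed

end
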